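(* For $n\in\{0,1,2,\dots\}$ define \[ b_n=\frac14\frac{(-1)^n}{n!}\sum_{k=0}^{n}(-1)^kS(n,k)(2k-1)!!, \] \[ c_n=\frac{(-1)^{n+1}}{n!}\sum_{k=1}^{n}(-1)^kS(n,k)\frac{k!}{2^k}\sum_{\ell=1}^{k}(-1)^{\ell}\binom{2k-\ell}{k}\frac{2^{\ell/2}}{\ell}\sin\frac{3\ell\pi}{4}. \] Then, with principal branches of the square root and of $\arctan$, for $|x|<\ln 2$, \[ \frac{1}{4\sqrt{2e^{-x}-1}}=\sum_{n=0}^{\infty}b_nx^n \qquad\text{and}\qquad \frac{\frac{\pi}{4}-\arctan\sqrt{2e^{-x}-1}}{\sqrt{2e^{-x}-1}}=\sum_{n=0}^{\infty}c_nx^n . \]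
   Context: $S(n,k)$ are the Stirling numbers of the second kind, given by $\frac{(e^x-1)^k}{k!}=\sum_{n\ge k}S(n,k)\frac{x^n}{n!}$. $(2k-1)!!=1\cdot3\cdots(2k-1)$ for $k\ge1$, and $(-1)!!=1$. An empty sum is $0$. *)

theory Defs
  imports "HOL-Analysis.Analysis" "HOL-Combinatorics.Stirling"
begin

text \<open>(2k-1)!! = 1*3*...*(2k-1), with (-1)!! = 1 (empty product for k = 0).\<close>
definition odd_dfact :: "nat \<Rightarrow> real" where
  "odd_dfact k = (\<Prod>i<k. real (2 * i + 1))"

definition b_coeff :: "nat \<Rightarrow> real" where
  "b_coeff n = (1/4) * ((-1) ^ n / fact n) *
     (\<Sum>k = 0..n. (-1) ^ k * real (Stirling n k) * odd_dfact k)"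

definition c_coeff :: "nat \<Rightarrow> real" where
  "c_coeff n = ((-1) ^ (n + 1) / fact n) *
     (\<Sum>k = 1..n. (-1) ^ k * real (Stirling n k) * (fact k / 2 ^ k) *
        (\<Sum>l = 1..k. (-1) ^ l * real ((2 * k - l) choose k) *
            (2 powr (real l / 2) / real l) * sin (3 * real l * pi / 4)))"

end

theory Submission
  imports Defs "HOL-Complex_Analysis.Complex_Analysis"
begin

no_notation vec_nth (infixl \<open>$\<close> 90)


lemma stirling_fps:
  fixes c :: complex
  shows "((fps_exp c - 1)^k) $ n = c^n * fact k * of_nat (Stirling n k) / fact n"
proof (induction n arbitrary: k)
  case 0
  then show ?case by (cases k) (auto simp: fps_nth_power_0)
next
  case (Suc n)
  show ?case
  proof (cases k)
    case 0
    then show ?thesis by simp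
  next
    case (Suc m)
    let ?G = "fps_exp c - 1"
    have d: "fps_deriv (?G ^ Suc m) = fps_const (of_nat (Suc m) * c) * (?G ^ Suc m + ?G ^ m)"
    proof -
      obtain G where G: "G = ?G" by blast
      have e: "fps_deriv G = fps_const c * (G + 1)" unfolding G by simp
      have "fps_deriv (G ^ Suc m) = of_nat (Suc m) * fps_deriv G * G ^ m"
        by (subst fps_deriv_power') simp
      also have "\<dots> = fps_const (of_nat (Suc m) * c) * (G ^ Suc m + G ^ m)"
      proof -
        have fc: "fps_const (of_nat (Suc m) * c) = of_nat (Suc m) * fps_const c"
          by (simp only: fps_const_mult [symmetric] fps_of_nat [symmetric])
        show ?thesis unfolding e fc power_Suc by (simp only: algebra_simps mult_1)
      qed
      finally show ?thesis unfolding G .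
    qed
    have "of_nat (Suc n) * (?G ^ Suc m) $ Suc n = fps_deriv (?G ^ Suc m) $ n"
      by (simp only: fps_deriv_nth Suc_eq_plus1)
    also have "\<dots> = of_nat (Suc m) * c * ((?G ^ Suc m) $ n + (?G ^ m) $ n)"
      unfolding d fps_mult_left_const_nth fps_add_nth by simp
    also have "\<dots> = of_nat (Suc m) * c * (c^n * fact (Suc m) * of_nat (Stirling n (Suc m)) / fact n
        + c^n * fact m * of_nat (Stirling n m) / fact n)"
      by (simp only: Suc.IH)
    also have "\<dots> = of_nat (Suc n) * (c ^ Suc n * fact (Suc m) * of_nat (Stirling (Suc n) (Suc m)) / fact (Suc n))"
    proof -
      have st: "(of_nat (Stirling (Suc n) (Suc m)) :: complex) = of_nat (Suc m) * of_nat (Stirling n (Suc m)) + of_nat (Stirling n m)"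
        by (simp add: algebra_simps)
      have f1: "(fact (Suc m) :: complex) = of_nat (Suc m) * fact m" by simp
      have f2: "(fact (Suc n) :: complex) = of_nat (Suc n) * fact n" by simp
      have nz: "(fact n :: complex) \<noteq> 0" "(of_nat (Suc n) :: complex) \<noteq> 0" by (simp, rule of_nat_neq_0)
      show ?thesis unfolding st f1 f2 using nz by (simp add: field_simps del: of_nat_Suc)
    qed
    finally have "of_nat (Suc n) * (?G ^ Suc m) $ Suc n = of_nat (Suc n) * (c ^ Suc n * fact (Suc m) * of_nat (Stirling (Suc n) (Suc m)) / fact (Suc n))" .
    then have "(?G ^ Suc m) $ Suc n = c ^ Suc n * fact (Suc m) * of_nat (Stirling (Suc n) (Suc m)) / fact (Suc n)"
      by (metis of_nat_neq_0 mult_left_cancel)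
    then show ?thesis using Suc by simp
  qed
qed






lemma prod_half: "(\<Prod>i\<in>{0..<n}. (-1/2 :: complex) - of_nat i) * 2^n = (-1)^n * of_real (odd_dfact n)"
proof (induction n)
  case 0 then show ?case by (simp add: odd_dfact_def)
next
  case (Suc n)
  have "(\<Prod>i\<in>{0..<Suc n}. (-1/2 :: complex) - of_nat i) * 2^Suc n
      = ((\<Prod>i\<in>{0..<n}. (-1/2 :: complex) - of_nat i) * 2^n) * (2 * (-1/2 - of_nat n))"
    by (simp add: algebra_simps)
  also have "\<dots> = (-1)^Suc n * of_real (odd_dfact (Suc n))"
    unfolding Suc.IH by (simp add: odd_dfact_def algebra_simps)
  finally show ?case .
qed

lemma gchoose_half: "((-1/2::complex) gchoose n) * fact n * 2^n = (-1)^n * of_real (odd_dfact n)"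
  using prod_half[of n] by (simp add: gbinomial_mult_fact')

lemma fact_double: "(fact (2*n) :: real) = 2^n * fact n * odd_dfact n"
proof (induction n)
  case 0 then show ?case by (simp add: odd_dfact_def)
next
  case (Suc n)
  have "(fact (2 * Suc n) :: real) = of_nat (2*n+2) * of_nat (2*n+1) * fact (2*n)"
    by (simp add: algebra_simps)
  also have "\<dots> = 2^Suc n * fact (Suc n) * odd_dfact (Suc n)"
    unfolding Suc.IH by (simp add: odd_dfact_def algebra_simps)
  finally show ?case .
qed

lemma central_binom: "(of_nat ((2*n) choose n) :: real) = 2^n * odd_dfact n / fact n"
proof -
  have "(of_nat ((2*n) choose n) :: real) = fact (2*n) / (fact n * fact n)"
    by (subst binomial_fact) (auto simp: mult_2)
  also have "\<dots> = 2^n * odd_dfact n / fact n"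
    unfolding fact_double by simp
  finally show ?thesis .
qed

definition Bh :: "complex \<Rightarrow> complex fps" where
  "Bh a = fps_binomial a oo (fps_const (-4) * fps_X)"

lemma Bh_nth: "Bh a $ n = (-4)^n * (a gchoose n)"
  by (simp add: Bh_def fps_compose_linear)

lemma Bh_add: "Bh (a + b) = Bh a * Bh b"
  unfolding Bh_def fps_binomial_add_mult by (rule fps_compose_mult_distrib) simp

lemma Bh_0: "Bh 0 = 1"
  by (simp add: fps_eq_iff Bh_nth gbinomial_0_left)

lemma Bh_1: "Bh 1 = 1 - fps_const 4 * fps_X"
proof -
  have "(1::complex) gchoose n = of_nat (1 choose n)" for n
    using binomial_gbinomial[of 1 n, where 'a=complex] by simp
  moreover have "(1 choose n) = (if n = 0 \<or> n = 1 then 1 else 0)" for n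
    by (cases n) (auto simp: binomial_eq_0)
  ultimately show ?thesis
    apply (auto simp: fps_eq_iff Bh_nth)
    by (metis One_nat_def le_antisym Suc_leI power_one_right)
qed

definition "sq = Bh (1/2)"
definition "B0 = Bh (-1/2)"
definition "cc = fps_const (1/2) * (1 - sq)"

lemma sq_B0: "sq * B0 = 1"
  using Bh_add[of "1/2" "-1/2"] by (simp add: sq_def B0_def Bh_0)

lemma sq_sq: "sq * sq = 1 - fps_const 4 * fps_X"
  using Bh_add[of "1/2" "1/2"] by (simp add: sq_def Bh_1)

lemma B0_nth: "B0 $ n = of_nat ((2*n) choose n)"
proof -
  have "B0 $ n = (-4)^n * ((-1/2::complex) gchoose n)" by (simp add: B0_def Bh_nth)
  also have "((-1/2::complex) gchoose n) = (-1)^n * of_real (odd_dfact n) / (fact n * 2^n)"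
    using gchoose_half[of n] by (simp add: field_simps)
  also have "(-4::complex)^n * ((-1)^n * of_real (odd_dfact n) / (fact n * 2^n))
      = of_real (2^n * odd_dfact n / fact n)"
    by (simp add: field_simps power_mult_distrib[symmetric])
  also have "\<dots> = of_nat ((2*n) choose n)"
    unfolding central_binom[symmetric] by simp
  finally show ?thesis .
qed

lemma sq_0: "sq $ 0 = 1" by (simp add: sq_def Bh_nth)
lemma cc_0: "cc $ 0 = 0" by (simp add: cc_def sq_0)

lemma cc_sq: "cc * cc = cc - fps_X"
proof -
  have h: "fps_const (1/2::complex) * 2 = 1"
    by (simp add: fps_numeral_fps_const)
  have "fps_const (4::complex) = 2 * 2" by (simp add: fps_numeral_fps_const)
  then show ?thesis unfolding cc_def using sq_sq h by algebra
qed

lemma sq_deriv: "fps_deriv sq = - 2 * B0"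
proof -
  have "fps_deriv (sq * sq) = fps_deriv (1 - fps_const 4 * fps_X)" by (simp only: sq_sq)
  then have e: "fps_deriv sq * sq + sq * fps_deriv sq = - fps_const 4" by simp
  have "fps_const (4::complex) = 2 * 2" by (simp add: fps_numeral_fps_const)
  then show ?thesis using e sq_B0 by algebra
qed

lemma cc_deriv: "fps_deriv cc = B0"
proof -
  have h: "fps_const (1/2::complex) * 2 = 1"
    by (simp add: fps_numeral_fps_const)
  have "fps_deriv cc = fps_const (1/2) * (- fps_deriv sq)" by (simp add: cc_def)
  then show ?thesis using h sq_deriv by algebra
qed

lemma B0_deriv: "sq * sq * fps_deriv B0 = 2 * B0"
proof -
  have "fps_deriv (sq * B0) = 0" by (simp only: sq_B0) simp
  then have e: "sq * fps_deriv B0 + fps_deriv sq * B0 = 0" by simp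
  show ?thesis using e sq_B0 sq_deriv by algebra
qed

lemma F3_alg:
  fixes s b d L P Q :: "'a :: comm_ring_1"
  assumes "s * b = 1" "s * s * d = 2 * b"
  shows "s * s * (L * b * P * b + Q * d) - 2 * (Q * b) = L * P"
proof -
  have "s * s * (L * b * P * b + Q * d) = L * P * ((s * b) * (s * b)) + Q * (s * s * d)"
    by (simp add: algebra_simps)
  then show ?thesis using assms by simp
qed

lemma F3: "sq * sq * fps_deriv (cc^l * B0) - 2 * (cc^l * B0) = of_nat l * cc^(l-1)"
proof -
  have d: "fps_deriv (cc^l * B0) = of_nat l * B0 * cc^(l-1) * B0 + cc^l * fps_deriv B0"
    by (simp add: fps_deriv_power' cc_deriv)
  show ?thesis unfolding d by (rule F3_alg[OF sq_B0 B0_deriv])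
qed




lemma F3_nth: "of_nat (k+1) * (cc^l*B0)$(k+1) - of_nat (4*k+2) * (cc^l*B0)$k = of_nat l * (cc^(l-1))$k"
proof -
  define D where "D = fps_deriv (cc^l * B0)"
  have "(1 - fps_const 4 * fps_X) * D - 2 * (cc^l * B0) = of_nat l * cc^(l-1)"
    using F3[of l] unfolding sq_sq D_def .
  then have e: "D - fps_const 4 * (fps_X * D) - fps_const 2 * (cc^l * B0) = fps_const (of_nat l) * cc^(l-1)"
    by (simp add: algebra_simps fps_of_nat fps_numeral_fps_const)
  have "(D - fps_const 4 * (fps_X * D) - fps_const 2 * (cc^l * B0)) $ k = (fps_const (of_nat l) * cc^(l-1)) $ k"
    by (simp only: e)
  then have "D $ k - 4 * (if k = 0 then 0 else D $ (k-1)) - 2 * (cc^l * B0) $ k = of_nat l * (cc^(l-1))$k"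
    by (simp only: fps_sub_nth fps_mult_left_const_nth fps_X_mult_nth)
  moreover have "D $ k = of_nat (k+1) * (cc^l*B0)$(k+1)" unfolding D_def by (simp only: fps_deriv_nth)
  moreover have "k > 0 \<Longrightarrow> D $ (k-1) = of_nat k * (cc^l*B0)$k" unfolding D_def by (simp only: fps_deriv_nth) simp
  ultimately show ?thesis
    by (cases k) (simp_all add: algebra_simps)
qed

definition beta :: "nat \<Rightarrow> nat \<Rightarrow> complex" where
  "beta l k = (if l \<le> k then of_nat ((2*k - l) choose k) else 0)"

lemma beta_rec: "beta (Suc (Suc l)) k = beta (Suc l) k - (if k = 0 then 0 else beta l (k-1))"
proof (cases k)
  case 0 then show ?thesis by (simp add: beta_def)
next
  case (Suc m)
  consider "Suc l \<le> m" | "l = m" | "m < l" by linarith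
  then show ?thesis
  proof cases
    case 1
    have a: "2 * Suc m - Suc l = Suc (2*m - l)" using 1 by simp
    have b: "2 * Suc m - Suc (Suc l) = 2*m - l" by simp
    show ?thesis using 1 unfolding Suc beta_def a b by simp
  next
    case 2
    have a: "2 * Suc m - Suc l = Suc m" using 2 by simp
    show ?thesis using 2 unfolding Suc beta_def a by simp
  next
    case 3
    then show ?thesis unfolding Suc beta_def by simp
  qed
qed

lemma beta_0: "beta 0 k = B0 $ k" by (simp add: beta_def B0_nth)

lemma beta_1: "beta 1 k = (cc * B0) $ k"
proof -
  have h: "fps_const (1/2::complex) * 2 = 1" by (simp add: fps_numeral_fps_const)
  have "cc * B0 = fps_const (1/2) * (B0 - 1)"
    using sq_B0 unfolding cc_def by (simp add: algebra_simps)
  then have e: "(cc * B0) $ k = (B0 $ k - (if k = 0 then 1 else 0)) / 2" by simp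
  show ?thesis
  proof (cases k)
    case 0 then show ?thesis by (simp add: beta_def cc_0)
  next
    case (Suc m)
    have "(2 * Suc m) choose Suc m = (Suc (2*m+1) choose Suc m)" by simp
    also have "\<dots> = ((2*m+1) choose m) + ((2*m+1) choose Suc m)" by (rule binomial_Suc_Suc)
    also have "(2*m+1) choose m = (2*m+1) choose Suc m"
      by (subst binomial_symmetric) (auto simp: Suc_diff_le)
    finally have "(2 * Suc m) choose Suc m = 2 * ((2*m+1) choose Suc m)" by simp
    then have "(of_nat ((2 * Suc m) choose Suc m) :: complex) = 2 * of_nat ((2*m+1) choose Suc m)"
      by (metis of_nat_mult of_nat_numeral)
    moreover have "beta 1 (Suc m) = of_nat ((2*m+1) choose Suc m)"
      by (simp add: beta_def del: binomial_Suc_Suc)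
    ultimately show ?thesis using e unfolding Suc B0_nth by (simp del: binomial_Suc_Suc)
  qed
qed

lemma F4: "(cc^l * B0) $ k = beta l k"
proof -
  have "\<forall>k. (cc^l * B0) $ k = beta l k \<and> (cc^Suc l * B0) $ k = beta (Suc l) k"
  proof (induction l)
    case 0 then show ?case using beta_1 by (simp add: beta_0)
  next
    case (Suc l)
    have r: "cc^Suc (Suc l) * B0 = cc^Suc l * B0 - fps_X * (cc^l * B0)"
    proof -
      have "cc^Suc (Suc l) * B0 = cc^l * (cc * cc) * B0" by (simp add: algebra_simps)
      then show ?thesis unfolding cc_sq by (simp add: algebra_simps)
    qed
    show ?case
    proof
      fix k
      show "(cc ^ Suc l * B0) $ k = beta (Suc l) k \<and> (cc ^ Suc (Suc l) * B0) $ k = beta (Suc (Suc l)) k"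
      proof
        show "(cc ^ Suc l * B0) $ k = beta (Suc l) k" using Suc.IH by blast
        have "(cc ^ Suc (Suc l) * B0) $ k = (cc ^ Suc l * B0) $ k - (if k = 0 then 0 else (cc ^ l * B0) $ (k - 1))"
          unfolding r by (simp only: fps_sub_nth fps_X_mult_nth)
        then show "(cc ^ Suc (Suc l) * B0) $ k = beta (Suc (Suc l)) k"
          using Suc.IH unfolding beta_rec by simp
      qed
    qed
  qed
  then show ?thesis by blast
qed




definition "ww = 1 - \<i>"
definition Sk :: "nat \<Rightarrow> complex" where "Sk k = (\<Sum>l=1..k. ww^l / of_nat l * beta l k)"

lemma sum_lin: "(\<Sum>l\<in>A. f l * (a * g l - c * h l)) = a * (\<Sum>l\<in>A. f l * g l) - c * (\<Sum>l\<in>A. f l * (h l :: complex))"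
  by (simp add: sum_distrib_left sum_subtractf algebra_simps)

lemma S_rec: "of_nat (k+1) * Sk (k+1) - of_nat (4*k+2) * Sk k = (\<Sum>j\<le>k. ww^Suc j * (cc^j)$k)"
proof -
  have "(\<Sum>l=1..k+1. ww^l / of_nat l * (of_nat (k+1) * beta l (k+1) - of_nat (4*k+2) * beta l k))
      = (\<Sum>l=1..k+1. ww^l / of_nat l * (of_nat l * (cc^(l-1))$k))"
    using F3_nth F4 by simp
  also have "\<dots> = (\<Sum>l=1..k+1. ww^l * (cc^(l-1))$k)"
    by (rule sum.cong) auto
  also have "\<dots> = (\<Sum>j=0..k. ww^Suc j * (cc^j)$k)"
  proof -
    have "(\<Sum>l=1..k+1. ww^l * (cc^(l-1))$k) = (\<Sum>l=Suc 0..Suc k. ww^l * (cc^(l-1))$k)" by simp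
    also have "\<dots> = (\<Sum>j=0..k. ww^Suc j * (cc^(Suc j - 1))$k)" by (rule sum.shift_bounds_cl_Suc_ivl)
    finally show ?thesis by simp
  qed
  also have "\<dots> = (\<Sum>j\<le>k. ww^Suc j * (cc^j)$k)"
    by (simp add: atMost_atLeast0)
  finally have e: "(\<Sum>l=1..k+1. ww^l / of_nat l * (of_nat (k+1) * beta l (k+1) - of_nat (4*k+2) * beta l k))
      = (\<Sum>j\<le>k. ww^Suc j * (cc^j)$k)" .
  have s1: "(\<Sum>l=1..k+1. ww^l / of_nat l * beta l k) = Sk k"
    by (simp add: Sk_def beta_def)
  have "(\<Sum>l=1..k+1. ww^l / of_nat l * (of_nat (k+1) * beta l (k+1) - of_nat (4*k+2) * beta l k))
     = of_nat (k+1) * (\<Sum>l=1..k+1. ww^l / of_nat l * beta l (k+1)) - of_nat (4*k+2) * (\<Sum>l=1..k+1. ww^l / of_nat l * beta l k)"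
    by (rule sum_lin)
  also have "\<dots> = of_nat (k+1) * Sk (k+1) - of_nat (4*k+2) * Sk k"
    unfolding s1 by (simp add: Sk_def)
  finally show ?thesis using e by simp
qed

lemma pow_nth_zero:
  fixes f g :: "'a::comm_ring_1 fps"
  assumes "f $ 0 = 0"
  shows "k < m \<Longrightarrow> (f^m * g) $ k = 0"
proof (induction m arbitrary: k)
  case 0 then show ?case by simp
next
  case (Suc m)
  have "(f^Suc m * g) $ k = (f * (f^m * g)) $ k" by (simp add: algebra_simps)
  also have "\<dots> = (\<Sum>i=0..k. f$i * (f^m * g) $ (k - i))" by (rule fps_mult_nth)
  also have "\<dots> = 0"
  proof (rule sum.neutral, intro ballI)
    fix i assume "i \<in> {0..k}"
    show "f$i * (f^m * g) $ (k - i) = 0"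
    proof (cases "i = 0")
      case True then show ?thesis using assms by simp
    next
      case False
      moreover have "i \<le> k" using \<open>i \<in> {0..k}\<close> by simp
      ultimately have "k - i < m" using Suc.prems by linarith
      then show ?thesis using Suc.IH by simp
    qed
  qed
  finally show ?case .
qed

definition Rf :: "nat \<Rightarrow> complex fps" where "Rf N = (\<Sum>j\<le>N. fps_const (ww^Suc j) * cc^j)"

lemma Rf_nth: "Rf N $ k = (\<Sum>j\<le>N. ww^Suc j * (cc^j)$k)"
  by (simp add: Rf_def fps_sum_nth)

lemma cc_pow_nth: "k < j \<Longrightarrow> (cc^j) $ k = 0"
  using pow_nth_zero[OF cc_0, of k j 1] by simp

lemma Rf_stable: "k \<le> N \<Longrightarrow> Rf N $ k = Rf k $ k"
  unfolding Rf_nth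
  by (rule sum.mono_neutral_right) (auto simp: cc_pow_nth)

lemma Rf_id_alg:
  fixes W A c :: "'a::comm_ring_1"
  assumes "W * A = 1"
  shows "(1 - (W*c)^Suc N) + W^Suc (Suc N) * c^Suc N * (A - c) = 1 - (W*c)^Suc (Suc N)"
proof -
  have "W^Suc (Suc N) * c^Suc N * (A - c) = (W*c)^Suc N * (W * A) - (W*c)^Suc (Suc N)"
    by (simp add: power_mult_distrib algebra_simps)
  then show ?thesis using assms by simp
qed

lemma Rf_id: "Rf N * (fps_const ((1+\<i>)/2) - cc) = 1 - (fps_const ww * cc)^Suc N"
proof (induction N)
  case 0
  have "ww * ((1+\<i>)/2) = 1" by (simp add: ww_def complex_eq_iff)
  then have "fps_const ww * fps_const ((1+\<i>)/2) = 1" by (metis fps_const_mult fps_const_1_eq_1)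
  then show ?case by (simp add: Rf_def algebra_simps)
next
  case (Suc N)
  have a: "fps_const ww * fps_const ((1+\<i>)/2) = 1"
  proof -
    have "ww * ((1+\<i>)/2) = 1" by (simp add: ww_def complex_eq_iff)
    then show ?thesis by (metis fps_const_mult fps_const_1_eq_1)
  qed
  have "Rf (Suc N) = Rf N + fps_const ww ^ Suc (Suc N) * cc^Suc N"
    by (simp add: Rf_def)
  then have "Rf (Suc N) * (fps_const ((1+\<i>)/2) - cc)
      = (1 - (fps_const ww * cc)^Suc N) + fps_const ww ^ Suc (Suc N) * cc^Suc N * (fps_const ((1+\<i>)/2) - cc)"
    using Suc.IH by (simp add: algebra_simps)
  also have "\<dots> = 1 - (fps_const ww * cc)^Suc (Suc N)"
    by (rule Rf_id_alg[OF a])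
  finally show ?case .
qed

lemma Rf_id2: "Rf N * (fps_const (1/2) - fps_X) = (1 - (fps_const ww * cc)^Suc N) * (fps_const ((1-\<i>)/2) - cc)"
proof -
  have q: "(fps_const ((1+\<i>)/2) - cc) * (fps_const ((1-\<i>)/2) - cc) = fps_const (1/2) - fps_X"
  proof -
    have m: "fps_const ((1+\<i>)/2) * fps_const ((1-\<i>)/2) = fps_const (1/2)"
      by (simp add: complex_eq_iff)
    have p: "fps_const ((1+\<i>)/2) + fps_const ((1-\<i>)/2) = 1"
      by (simp add: complex_eq_iff)
    have "(fps_const ((1+\<i>)/2) - cc) * (fps_const ((1-\<i>)/2) - cc)
        = fps_const ((1+\<i>)/2) * fps_const ((1-\<i>)/2) - (fps_const ((1+\<i>)/2) + fps_const ((1-\<i>)/2)) * cc + cc * cc"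
      by (simp only: algebra_simps)
    also have "\<dots> = fps_const (1/2) - fps_X"
      unfolding m p cc_sq by simp
    finally show ?thesis .
  qed
  have "Rf N * (fps_const (1/2) - fps_X) = Rf N * (fps_const ((1+\<i>)/2) - cc) * (fps_const ((1-\<i>)/2) - cc)"
    by (simp add: q mult.assoc)
  then show ?thesis by (simp only: Rf_id)
qed

lemma Im_cc: "Im (cc $ k) = 0"
proof (cases k)
  case 0 then show ?thesis by (simp add: cc_0)
next
  case (Suc n)
  have "(fps_deriv cc) $ n = B0 $ n" by (simp only: cc_deriv)
  then have "of_nat (Suc n) * cc $ Suc n = of_nat ((2*n) choose n)" by (simp add: B0_nth)
  then have "cc $ Suc n = of_nat ((2*n) choose n) / of_nat (Suc n)"
    by (metis nonzero_mult_div_cancel_left of_nat_neq_0)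
  then show ?thesis using Suc by simp
qed

lemma Rf_coeff: "k \<le> N \<Longrightarrow> Rf N $ k / 2 - (if k = 0 then 0 else Rf N $ (k-1)) = (if k = 0 then (1-\<i>)/2 else 0) - cc $ k"
proof -
  assume k: "k \<le> N"
  have "(Rf N * (fps_const (1/2) - fps_X)) $ k = ((1 - (fps_const ww * cc)^Suc N) * (fps_const ((1-\<i>)/2) - cc)) $ k"
    by (simp only: Rf_id2)
  moreover have "(Rf N * (fps_const (1/2) - fps_X)) = fps_const (1/2) * Rf N - fps_X * Rf N"
    by (simp add: algebra_simps)
  moreover have "((1 - (fps_const ww * cc)^Suc N) * (fps_const ((1-\<i>)/2) - cc)) = 
     (fps_const ((1-\<i>)/2) - cc) - (fps_const ww * cc)^Suc N * (fps_const ((1-\<i>)/2) - cc)"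
    by (simp add: algebra_simps)
  moreover have "((fps_const ww * cc)^Suc N * (fps_const ((1-\<i>)/2) - cc)) $ k = 0"
    by (rule pow_nth_zero) (use k cc_0 in auto)
  ultimately show ?thesis by simp
qed

lemma Im_Rf: "k \<le> N \<Longrightarrow> Im (Rf N $ k) = - (2^k)"
proof (induction k)
  case 0
  have "Rf N $ 0 / 2 = (1-\<i>)/2 - cc $ 0" using Rf_coeff[of 0 N] by simp
  then have "Im (Rf N $ 0 / 2) = Im ((1-\<i>)/2 - cc $ 0)" by simp
  then show ?case using Im_cc[of 0] by simp
next
  case (Suc k)
  then have "Im (Rf N $ k) = - (2^k)" by simp
  moreover have "Im (Rf N $ Suc k / 2 - Rf N $ k) = 0"
    using Rf_coeff[of "Suc k" N] Suc.prems Im_cc[of "Suc k"] by simp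
  ultimately show ?case by simp
qed

lemma T_rec: "real (k+1) * Im (Sk (k+1)) - real (4*k+2) * Im (Sk k) = - (2^k)"
proof -
  have "Im (of_nat (k+1) * Sk (k+1) - of_nat (4*k+2) * Sk k) = Im (Rf k $ k)"
    unfolding S_rec Rf_nth ..
  then show ?thesis using Im_Rf[of k k] by simp
qed




lemma ww_rcis: "ww = rcis (sqrt 2) (-(pi/4))"
  by (simp add: ww_def complex_eq_iff rcis_def cos_45 sin_45)

lemma Im_ww_pow: "Im (ww ^ l) = (-1)^l * 2 powr (real l / 2) * sin (3 * real l * pi / 4)"
proof -
  have "Im (ww ^ l) = sqrt 2 ^ l * sin (real l * (-(pi/4)))"
    unfolding ww_rcis DeMoivre2 by (simp add: rcis_def)
  also have "sin (real l * (-(pi/4))) = - sin (real l * pi / 4)" by simp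
  also have "sin (real l * pi / 4) = - ((-1)^l * sin (3 * real l * pi / 4))"
  proof -
    have "sin (3 * real l * pi / 4) = sin (real l * pi - real l * pi / 4)"
      by (rule arg_cong[where f=sin]) (simp add: field_simps)
    also have "\<dots> = sin (real l * pi) * cos (real l * pi / 4) - cos (real l * pi) * sin (real l * pi / 4)"
      by (rule sin_diff)
    also have "\<dots> = - ((-1)^l * sin (real l * pi / 4))" by simp
    finally have "(-1)^l * sin (3 * real l * pi / 4) = - ((-1)^l * (-1)^l * sin (real l * pi / 4))" by simp
    also have "(-1::real)^l * (-1)^l = 1" by (simp flip: power_mult_distrib)
    finally show ?thesis by simp
  qed
  also have "sqrt 2 ^ l = 2 powr (real l / 2)"
    by (simp add: powr_half_sqrt_powr powr_realpow real_sqrt_power)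
  finally show ?thesis by simp
qed

definition Tk :: "nat \<Rightarrow> real" where
  "Tk k = (\<Sum>l = 1..k. (-1) ^ l * real ((2 * k - l) choose k) *
            (2 powr (real l / 2) / real l) * sin (3 * real l * pi / 4))"

lemma Tk_Im: "Tk k = Im (Sk k)"
  unfolding Tk_def Sk_def Im_sum
proof (rule sum.cong)
  fix l assume l: "l \<in> {1..k}"
  have e: "ww ^ l / of_nat l * beta l k = of_real (real ((2 * k - l) choose k) / real l) * ww ^ l"
    using l by (simp add: beta_def field_simps)
  have h: "Im (ww ^ l / of_nat l * beta l k) = real ((2 * k - l) choose k) / real l * Im (ww ^ l)"
    unfolding e by simp
  then show "(-1) ^ l * real ((2 * k - l) choose k) * (2 powr (real l / 2) / real l) * sin (3 * real l * pi / 4)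
      = Im (ww ^ l / of_nat l * beta l k)"
    unfolding h Im_ww_pow by simp
qed simp

definition aa :: "nat \<Rightarrow> real" where "aa k = - ((-1)^k * Tk k / 2^k)"

lemma aa_0: "aa 0 = 0" by (simp add: aa_def Tk_def)

lemma aa_rec: "real (k+1) * aa (k+1) + real (2*k+1) * aa k = - ((-1)^k / 2)"
proof -
  have t: "real (k+1) * Tk (k+1) = real (4*k+2) * Tk k - 2^k"
    using T_rec[of k] unfolding Tk_Im by simp
  have "real (k+1) * aa (k+1) = (-1)^k * (real (k+1) * Tk (k+1)) / 2^(k+1)"
    by (simp add: aa_def)
  also have "\<dots> = (-1)^k * (real (4*k+2) * Tk k - 2^k) / 2^(k+1)" unfolding t ..
  also have "\<dots> = (-1)^k * real (2*k+1) * Tk k / 2^k - (-1)^k / 2"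
    by (simp add: field_simps)
  finally show ?thesis by (simp add: aa_def)
qed

lemma c_coeff_alt: "c_coeff n = ((-1) ^ n / fact n) * (\<Sum>k = 0..n. real (Stirling n k) * fact k * aa k)"
proof -
  have "(\<Sum>k = 0..n. real (Stirling n k) * fact k * aa k) = (\<Sum>k = 1..n. real (Stirling n k) * fact k * aa k)"
    by (rule sum.mono_neutral_right) (auto simp: aa_0 Suc_le_eq)
  then show ?thesis
    unfolding c_coeff_def Tk_def[symmetric] aa_def
    by (simp add: sum_distrib_left field_simps)
qed




lemma dom_x: fixes x :: complex assumes "norm x < ln 2" shows "2 * exp (- x) - 1 \<notin> \<real>\<^sub>\<le>\<^sub>0"
proof
  assume "2 * exp (- x) - 1 \<in> \<real>\<^sub>\<le>\<^sub>0"
  then have re: "Re (2 * exp (- x) - 1) \<le> 0" and im: "Im (2 * exp (- x) - 1) = 0"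
    by (auto simp: complex_nonpos_Reals_iff)
  have l2: "ln 2 < pi" using ln_2_less_1 pi_gt3 by linarith
  have "\<bar>Im x\<bar> \<le> norm x" by (rule abs_Im_le_cmod)
  then have bi: "\<bar>Im x\<bar> < ln 2" using assms by linarith
  have "sin (Im x) = 0" using im by (simp add: Im_exp)
  then have "Im x = 0" using sin_eq_0_pi[of "Im x"] bi l2 by linarith
  then have "Re (2 * exp (- x) - 1) = 2 * exp (- Re x) - 1" by (simp add: Re_exp)
  moreover have "\<bar>Re x\<bar> \<le> norm x" by (rule abs_Re_le_cmod)
  then have "Re x < ln 2" using assms by linarith
  then have "exp (- Re x) > exp (- ln 2)" by simp
  then have "exp (- Re x) > 1/2" by (simp add: exp_minus)
  ultimately show False using re by linarith
qed

lemma csqrt_Re_nz: assumes "y \<notin> \<real>\<^sub>\<le>\<^sub>0" shows "Re (csqrt y) \<noteq> 0"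
proof
  assume h: "Re (csqrt y) = 0"
  define t where "t = Im (csqrt y)"
  have c: "csqrt y = \<i> * of_real t"
  proof -
    have "csqrt y = Complex (Re (csqrt y)) (Im (csqrt y))" by (simp only: complex_surj)
    also have "\<dots> = Complex 0 t" unfolding h t_def ..
    also have "\<dots> = \<i> * of_real t" by (simp add: complex_eq_iff)
    finally show ?thesis .
  qed
  have "y = (csqrt y)^2" by (simp only: power2_csqrt)
  also have "\<dots> = of_real (-(t^2))" unfolding c by (simp add: power_mult_distrib)
  finally have "y = of_real (-(t^2))" .
  then have "y \<in> \<real>\<^sub>\<le>\<^sub>0" by (simp add: complex_nonpos_Reals_iff)
  then show False using assms by simp
qed

lemma csqrt_nz: assumes "y \<notin> \<real>\<^sub>\<le>\<^sub>0" shows "csqrt y \<noteq> 0"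
  using csqrt_Re_nz[OF assms] by auto

definition Phi1 :: "complex \<Rightarrow> complex" where "Phi1 u = 1 / (4 * csqrt (1 + 2 * u))"

definition H1 :: "complex fps" where "H1 = fps_const (1/4) * (fps_binomial (-1/2) oo (fps_const 2 * fps_X))"

lemma Phi1_exp: "Phi1 has_fps_expansion H1"
proof -
  have a: "(\<lambda>z::complex. (1 + z) powr (-1/2)) has_fps_expansion fps_binomial (-1/2)"
    by (rule has_fps_expansion_binomial_complex)
  have b: "(\<lambda>u::complex. 2 * u) has_fps_expansion fps_const 2 * fps_X"
    by (intro fps_expansion_intros)
  have c: "((\<lambda>z::complex. (1 + z) powr (-1/2)) \<circ> (\<lambda>u. 2 * u)) has_fps_expansion (fps_binomial (-1/2) oo (fps_const 2 * fps_X))"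
    by (rule has_fps_expansion_compose[OF a b]) simp
  have d: "(\<lambda>u. 1/4 * ((\<lambda>z::complex. (1 + z) powr (-1/2)) \<circ> (\<lambda>u. 2 * u)) u) has_fps_expansion H1"
    unfolding H1_def by (rule has_fps_expansion_cmult_left[OF c])
  have e: "(\<lambda>u. 1/4 * ((\<lambda>z::complex. (1 + z) powr (-1/2)) \<circ> (\<lambda>u. 2 * u)) u) = Phi1"
  proof
    fix u :: complex
    have "(1 + 2 * u) powr (-1/2) = inverse ((1 + 2*u) powr (1/2))"
      using powr_minus[of "1 + 2*u" "1/2"] by simp
    then show "1/4 * ((\<lambda>z::complex. (1 + z) powr (-1/2)) \<circ> (\<lambda>u. 2 * u)) u = Phi1 u"
      by (simp add: Phi1_def csqrt_conv_powr field_simps)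
  qed
  show ?thesis using d unfolding e .
qed

lemma U_exp: "(\<lambda>x::complex. exp (- x) - 1) has_fps_expansion fps_exp (-1) - 1"
  by (intro fps_expansion_intros)

lemma H1_nth: "H1 $ k = 1/4 * (2^k * ((-1/2) gchoose k))"
  by (simp add: H1_def fps_compose_linear)

lemma F1_coeff: "(H1 oo (fps_exp (-1) - 1)) $ n = of_real (b_coeff n)"
proof -
  have "(H1 oo (fps_exp (-1) - 1)) $ n = (\<Sum>i=0..n. H1 $ i * ((fps_exp (-1) - 1)^i) $ n)"
    by (rule fps_compose_nth)
  also have "\<dots> = (\<Sum>i=0..n. 1/4 * ((-1)^n / fact n) * ((-1)^i * of_nat (Stirling n i) * of_real (odd_dfact i)))"
  proof (rule sum.cong)
    fix i assume "i \<in> {0..n}"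
    have g: "((-1/2::complex) gchoose i) * 2^i * fact i = (-1)^i * of_real (odd_dfact i)"
      using gchoose_half[of i] by (simp add: algebra_simps)
    show "H1 $ i * ((fps_exp (-1) - 1)^i) $ n = 1/4 * ((-1)^n / fact n) * ((-1)^i * of_nat (Stirling n i) * of_real (odd_dfact i))"
    proof -
      have "H1 $ i * ((fps_exp (-1) - 1)^i) $ n = 1/4 * ((-1)^n / fact n) * of_nat (Stirling n i) * (((-1/2::complex) gchoose i) * 2^i * fact i)"
        unfolding H1_nth stirling_fps by (simp add: field_simps)
      also have "\<dots> = 1/4 * ((-1)^n / fact n) * ((-1)^i * of_nat (Stirling n i) * of_real (odd_dfact i))"
        unfolding g by (simp add: algebra_simps)
      finally show ?thesis .
    qed
  qed simp
  also have "\<dots> = of_real (b_coeff n)"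
    by (simp add: b_coeff_def sum_distrib_left)
  finally show ?thesis .
qed

lemma F1_eq: "(\<lambda>x. 1 / (4 * csqrt (2 * exp (- x) - 1))) = Phi1 \<circ> (\<lambda>x::complex. exp (- x) - 1)"
  by (auto simp: Phi1_def algebra_simps)

lemma part1:
  fixes x :: complex
  assumes "norm x < ln 2"
  shows "(\<lambda>n. complex_of_real (b_coeff n) * x ^ n) sums (1 / (4 * csqrt (2 * exp (- x) - 1)))"
proof -
  have e: "(\<lambda>x. 1 / (4 * csqrt (2 * exp (- x) - 1))) has_fps_expansion (H1 oo (fps_exp (-1) - 1))"
    unfolding F1_eq by (rule has_fps_expansion_compose[OF Phi1_exp U_exp]) simp
  have hs: "(\<lambda>x. csqrt (2 * exp (- x) - 1)) holomorphic_on ball 0 (ln 2)"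
    by (rule holomorphic_on_csqrt') (auto intro!: holomorphic_intros simp: dom_x)
  have h: "(\<lambda>x. 1 / (4 * csqrt (2 * exp (- x) - 1))) holomorphic_on eball 0 (ereal (ln 2))"
    unfolding eball_ereal
    by (intro holomorphic_intros hs) (use csqrt_nz dom_x in force)
  have "(\<lambda>n. (H1 oo (fps_exp (-1) - 1)) $ n * x ^ n) sums (1 / (4 * csqrt (2 * exp (- x) - 1)))"
    by (rule has_fps_expansion_imp_sums_complex[OF e h]) (use assms in simp)
  then show ?thesis unfolding F1_coeff .
qed






definition Q :: "complex \<Rightarrow> complex" where
  "Q y = (of_real pi / 4 - Arctan (csqrt y)) / csqrt y"

lemma Q_alg0:
  fixes s N D :: complex
  assumes "s \<noteq> 0"
  shows "((0 - D * inverse (2 * s)) * s - N * inverse (2 * s)) / (s * s)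
       = (- D - N / s) / (2 * s^2)"
  using assms by (simp add: field_simps power2_eq_square)

lemma Q_alg:
  fixes s N :: complex
  assumes "s \<noteq> 0" "1 + s^2 \<noteq> 0"
  shows "((0 - inverse (1 + s^2) * inverse (2 * s)) * s - N * inverse (2 * s)) / (s * s)
       = (-1 / (1 + s^2) - N / s) / (2 * s^2)"
  using Q_alg0[OF assms(1), of "inverse (1 + s^2)" N] by (simp only: inverse_eq_divide minus_divide_left)

lemma Q_deriv:
  assumes y: "y \<notin> \<real>\<^sub>\<le>\<^sub>0"
  shows "(Q has_field_derivative ((-1 / (1 + y) - Q y) / (2 * y))) (at y)"
proof -
  define s where "s = csqrt y"
  have s0: "s \<noteq> 0" using csqrt_nz[OF y] s_def by simp
  have ss: "s^2 = y" unfolding s_def by simp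
  have y1: "1 + y \<noteq> 0"
  proof
    assume "1 + y = 0" then have "y = - 1" by (metis add_diff_cancel_left' diff_0)
    then show False using y by simp
  qed
  have ds: "(csqrt has_field_derivative inverse (2 * csqrt y)) (at y)"
    by (rule has_field_derivative_csqrt[OF y])
  have da: "(Arctan has_field_derivative inverse (1 + (csqrt y)^2)) (at (csqrt y))"
    by (rule has_field_derivative_Arctan) (use csqrt_Re_nz[OF y] in simp)
  have dn: "((\<lambda>y. of_real pi / 4 - Arctan (csqrt y)) has_field_derivative
      (0 - inverse (1 + (csqrt y)^2) * inverse (2 * csqrt y))) (at y)"
    by (rule DERIV_diff[OF DERIV_const DERIV_chain2[OF da ds]])
  have D1: "((\<lambda>y. (of_real pi / 4 - Arctan (csqrt y)) / csqrt y) has_field_derivative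
      ((0 - inverse (1 + (csqrt y)^2) * inverse (2 * csqrt y)) * csqrt y - (of_real pi / 4 - Arctan (csqrt y)) * inverse (2 * csqrt y)) / (csqrt y * csqrt y)) (at y)"
    by (rule DERIV_divide[OF dn ds]) (use s0 s_def in simp)
  moreover have EQ: "((0 - inverse (1 + (csqrt y)^2) * inverse (2 * csqrt y)) * csqrt y - (of_real pi / 4 - Arctan (csqrt y)) * inverse (2 * csqrt y)) / (csqrt y * csqrt y)
     = (-1 / (1 + y) - Q y) / (2 * y)"
  proof -
    define N where "N = of_real pi / 4 - Arctan s"
    have "((0 - inverse (1 + (csqrt y)^2) * inverse (2 * csqrt y)) * csqrt y - (of_real pi / 4 - Arctan (csqrt y)) * inverse (2 * csqrt y)) / (csqrt y * csqrt y)
      = ((0 - inverse (1 + s^2) * inverse (2 * s)) * s - N * inverse (2 * s)) / (s * s)"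
      unfolding s_def N_def ..
    also have "\<dots> = (-1 / (1 + s^2) - N / s) / (2 * s^2)"
      by (rule Q_alg) (use s0 y1 ss in auto)
    also have "\<dots> = (-1 / (1 + y) - Q y) / (2 * y)"
      by (simp only: ss Q_def N_def[symmetric] s_def[symmetric])
    finally show ?thesis .
  qed
  have QQ: "Q = (\<lambda>y. (of_real pi / 4 - Arctan (csqrt y)) / csqrt y)"
    by (rule ext) (simp only: Q_def)
  show ?thesis using DERIV_cong[OF D1 EQ] unfolding QQ .
qed

lemma Q_holo: "Q holomorphic_on A" if "\<And>y. y \<in> A \<Longrightarrow> y \<notin> \<real>\<^sub>\<le>\<^sub>0"
  unfolding holomorphic_on_def
  using Q_deriv that field_differentiable_at_within field_differentiable_def by blast

definition Phi2 :: "complex \<Rightarrow> complex" where "Phi2 u = Q (1 + 2 * u)"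

lemma dom_u: "norm (u::complex) < 1/2 \<Longrightarrow> 1 + 2 * u \<notin> \<real>\<^sub>\<le>\<^sub>0"
proof -
  assume "norm u < 1/2"
  moreover have "\<bar>Re u\<bar> \<le> norm u" by (rule abs_Re_le_cmod)
  ultimately have "Re (1 + 2 * u) > 0" by simp
  then show ?thesis by (auto simp: complex_nonpos_Reals_iff)
qed

lemma Phi2_deriv:
  assumes "norm u < 1/2"
  shows "deriv Phi2 u = (-1 / (2 + 2 * u) - Phi2 u) / (1 + 2 * u)"
proof -
  have d1: "((\<lambda>u. 1 + 2 * u) has_field_derivative 2) (at u)"
    by (auto intro!: derivative_eq_intros)
  have "(Phi2 has_field_derivative ((-1 / (1 + (1 + 2*u)) - Q (1 + 2*u)) / (2 * (1 + 2*u))) * 2) (at u)"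
    unfolding Phi2_def[abs_def] by (rule DERIV_chain2[OF Q_deriv[OF dom_u[OF assms]] d1])
  then have "deriv Phi2 u = ((-1 / (1 + (1 + 2*u)) - Q (1 + 2*u)) / (2 * (1 + 2*u))) * 2"
    by (rule DERIV_imp_deriv)
  moreover have a: "1 + 2 * u \<noteq> 0" using dom_u[OF assms] by auto
  moreover have b: "2 + 2 * u \<noteq> 0"
  proof
    assume "2 + 2 * u = 0" then have "2 * (1 + u) = 0" by (simp add: algebra_simps)
    then have "1 + u = 0" by (metis mult_eq_0_iff zero_neq_numeral)
    then have "u = -1" by (metis add_diff_cancel_left' diff_0)
    then show False using assms by simp
  qed
  moreover have e12: "1 + (1 + 2 * u) = 2 + 2 * u" by simp
  moreover have hh: "\<And>x a :: complex. x / (2 * a) * 2 = x / a"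
    by (case_tac "a = 0") (simp_all add: field_simps)
  ultimately have "deriv Phi2 u = (-1 / (1 + (1 + 2*u)) - Q (1 + 2*u)) / (1 + 2*u)"
    by (simp only: hh)
  then show ?thesis unfolding Phi2_def by (simp only: e12)
qed

lemma Phi2_ode:
  assumes "norm u < 1/2"
  shows "(1 + u) * ((1 + 2 * u) * deriv Phi2 u + Phi2 u) = - 1/2"
proof -
  have a: "1 + 2 * u \<noteq> 0" using dom_u[OF assms] by auto
  have b: "2 + 2 * u \<noteq> 0"
  proof
    assume "2 + 2 * u = 0" then have "2 * (1 + u) = 0" by (simp add: algebra_simps)
    then have "1 + u = 0" by (metis mult_eq_0_iff zero_neq_numeral)
    then have "u = -1" by (metis add_diff_cancel_left' diff_0)
    then show False using assms by simp
  qed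
  have c: "1 + u \<noteq> 0" using b by (metis distrib_left mult_2 mult_eq_0_iff one_add_one)
  have "(1 + 2 * u) * deriv Phi2 u + Phi2 u = -1 / (2 + 2 * u)"
    unfolding Phi2_deriv[OF assms] using a by simp
  moreover have "2 + 2 * u = 2 * (1 + u)" by simp
  ultimately show ?thesis using b c by (simp add: field_simps)
qed

lemma Phi2_holo: "Phi2 holomorphic_on ball 0 (1/2)"
proof -
  have h1: "(\<lambda>u::complex. 1 + 2 * u) holomorphic_on ball 0 (1/2)" by (intro holomorphic_intros)
  have h2: "Q holomorphic_on (\<lambda>u. 1 + 2 * u) ` ball 0 (1/2)"
  proof (rule Q_holo)
    fix y assume "y \<in> (\<lambda>u. 1 + 2 * u) ` ball (0::complex) (1/2)"
    then obtain u where u: "u \<in> ball (0::complex) (1/2)" "y = 1 + 2 * u" by blast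
    from u(1) have "norm u < 1/2" by simp
    from dom_u[OF this] show "y \<notin> \<real>\<^sub>\<le>\<^sub>0" using u(2) by simp
  qed
  have "Q \<circ> (\<lambda>u. 1 + 2 * u) holomorphic_on ball 0 (1/2)"
    by (rule holomorphic_on_compose[OF h1 h2])
  then show ?thesis by (simp add: Phi2_def[abs_def] o_def)
qed

definition H2 :: "complex fps" where "H2 = Abs_fps (\<lambda>k. of_real (aa k))"

lemma Phi2_exp: "Phi2 has_fps_expansion H2"
proof -
  have an: "Phi2 analytic_on {0}"
    unfolding analytic_on_def using Phi2_holo by (intro ballI exI[of _ "1/2"]) auto
  define G where "G = fps_expansion Phi2 0"
  have G: "Phi2 has_fps_expansion G" unfolding G_def by (rule analytic_at_imp_has_fps_expansion_0[OF an])
  have dG: "deriv Phi2 has_fps_expansion fps_deriv G" by (rule has_fps_expansion_deriv[OF G])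
  have x1: "(\<lambda>u::complex. 1 + u) has_fps_expansion 1 + fps_X"
    by (rule has_fps_expansion_add[OF has_fps_expansion_1 has_fps_expansion_fps_X])
  have x2: "(\<lambda>u::complex. 1 + 2 * u) has_fps_expansion 1 + fps_const 2 * fps_X"
    by (rule has_fps_expansion_add[OF has_fps_expansion_1 has_fps_expansion_cmult_left[OF has_fps_expansion_fps_X]])
  define K where "K = (1 + fps_const 2 * fps_X) * fps_deriv G + G"
  have e1: "(\<lambda>u. (1 + u) * ((1 + 2 * u) * deriv Phi2 u + Phi2 u)) has_fps_expansion (1 + fps_X) * K"
    unfolding K_def by (intro has_fps_expansion_mult has_fps_expansion_add x1 x2 dG G)
  have ev: "eventually (\<lambda>u. (1 + u) * ((1 + 2 * u) * deriv Phi2 u + Phi2 u) = - 1/2) (nhds (0::complex))"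
  proof -
    have "eventually (\<lambda>u. u \<in> ball (0::complex) (1/2)) (nhds 0)"
      by (intro eventually_nhds_in_open) auto
    then show ?thesis by eventually_elim (simp add: Phi2_ode)
  qed
  have "(\<lambda>u::complex. - 1/2) has_fps_expansion (1 + fps_X) * K"
    using e1 has_fps_expansion_cong[OF ev refl] by simp
  moreover have "(\<lambda>u::complex. - 1/2) has_fps_expansion fps_const (- 1/2)"
    by (rule has_fps_expansion_const)
  ultimately have KK: "(1 + fps_X) * K = fps_const (- 1/2)"
    by (rule fps_expansion_unique_complex)
  have K0: "K $ 0 = - 1/2"
    using arg_cong[OF KK, of "\<lambda>f. f $ 0"] by simp
  have KS: "K $ Suc n = - K $ n" for n
  proof -
    have "((1 + fps_X) * K) $ Suc n = K $ Suc n + K $ n" by (simp add: algebra_simps)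
    then have "K $ n + K $ Suc n = 0" using arg_cong[OF KK, of "\<lambda>f. f $ Suc n"] by (simp add: algebra_simps)
    then show ?thesis by (simp add: eq_neg_iff_add_eq_0 add.commute)
  qed
  have Kn: "K $ n = - ((-1)^n / 2)" for n
    by (induction n) (simp_all add: K0 KS)
  have Kc: "K $ n = of_nat (n+1) * G $ (n+1) + of_nat (2*n+1) * G $ n" for n
    unfolding K_def by (cases n) (simp_all add: algebra_simps)
  have G0: "G $ 0 = 0"
  proof -
    have "G $ 0 = Phi2 0" using has_fps_expansion_imp_0_eq_fps_nth_0[OF G] by simp
    also have "Arctan 1 = of_real (pi / 4)" using Arctan_of_real[of 1] by simp
    then have "Phi2 0 = 0" by (simp add: Phi2_def Q_def)
    finally show ?thesis .
  qed
  have "G $ k = of_real (aa k)" for k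
  proof (induction k)
    case 0 then show ?case by (simp add: G0 aa_0)
  next
    case (Suc k)
    have "of_nat (k+1) * G $ (k+1) = - ((-1)^k / 2) - of_nat (2*k+1) * G $ k"
      using Kc[of k] Kn[of k] by (simp add: algebra_simps)
    also have "\<dots> = of_real (- ((-1)^k / 2) - real (2*k+1) * aa k)"
      using Suc.IH by simp
    also have "- ((-1)^k / 2) - real (2*k+1) * aa k = real (k+1) * aa (k+1)"
      using aa_rec[of k] by linarith
    finally have "of_nat (k+1) * G $ (k+1) = of_nat (k+1) * of_real (aa (k+1))" by simp
    moreover have nz: "(1 + of_nat k :: complex) \<noteq> 0"
      using of_nat_neq_0[of k, where 'a=complex] by (metis of_nat_Suc add.commute)
    ultimately show ?case by simp
  qed
  then have "G = H2" by (simp add: fps_eq_iff H2_def)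
  then show ?thesis using G by simp
qed

lemma F2_coeff: "(H2 oo (fps_exp (-1) - 1)) $ n = of_real (c_coeff n)"
proof -
  have "(H2 oo (fps_exp (-1) - 1)) $ n = (\<Sum>i=0..n. H2 $ i * ((fps_exp (-1) - 1)^i) $ n)"
    by (rule fps_compose_nth)
  also have "\<dots> = (\<Sum>i=0..n. of_real ((-1)^n / fact n * (real (Stirling n i) * fact i * aa i)))"
    by (rule sum.cong) (simp_all add: H2_def stirling_fps field_simps)
  also have "\<dots> = of_real (c_coeff n)"
    unfolding c_coeff_alt by (simp add: sum_distrib_left)
  finally show ?thesis .
qed

lemma part2:
  fixes x :: complex
  assumes "norm x < ln 2"
  shows "(\<lambda>n. complex_of_real (c_coeff n) * x ^ n) sums
           ((of_real pi / 4 - Arctan (csqrt (2 * exp (- x) - 1))) / csqrt (2 * exp (- x) - 1))"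
proof -
  have eq: "(\<lambda>x. (of_real pi / 4 - Arctan (csqrt (2 * exp (- x) - 1))) / csqrt (2 * exp (- x) - 1))
      = Phi2 \<circ> (\<lambda>x::complex. exp (- x) - 1)"
    by (auto simp: Phi2_def Q_def algebra_simps)
  have e: "(\<lambda>x. (of_real pi / 4 - Arctan (csqrt (2 * exp (- x) - 1))) / csqrt (2 * exp (- x) - 1))
       has_fps_expansion (H2 oo (fps_exp (-1) - 1))"
    unfolding eq by (rule has_fps_expansion_compose[OF Phi2_exp U_exp]) simp
  have hq: "Q \<circ> (\<lambda>x. 2 * exp (- x) - 1) holomorphic_on ball 0 (ln 2)"
  proof -
    have h1: "(\<lambda>x::complex. 2 * exp (- x) - 1) holomorphic_on ball 0 (ln 2)" by (intro holomorphic_intros)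
    have h2: "Q holomorphic_on (\<lambda>x. 2 * exp (- x) - 1) ` ball 0 (ln 2)"
    proof (rule Q_holo)
      fix y assume "y \<in> (\<lambda>x. 2 * exp (- x) - 1) ` ball (0::complex) (ln 2)"
      then obtain u where u: "u \<in> ball (0::complex) (ln 2)" "y = 2 * exp (- u) - 1" by blast
      from u(1) have "norm u < ln 2" by simp
      from dom_x[OF this] show "y \<notin> \<real>\<^sub>\<le>\<^sub>0" using u(2) by simp
    qed
    show ?thesis by (rule holomorphic_on_compose[OF h1 h2])
  qed
  have h: "(\<lambda>x. (of_real pi / 4 - Arctan (csqrt (2 * exp (- x) - 1))) / csqrt (2 * exp (- x) - 1))
      holomorphic_on eball 0 (ereal (ln 2))"
    using hq by (simp add: o_def Q_def)
  have "(\<lambda>n. (H2 oo (fps_exp (-1) - 1)) $ n * x ^ n) sums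
      ((of_real pi / 4 - Arctan (csqrt (2 * exp (- x) - 1))) / csqrt (2 * exp (- x) - 1))"
    by (rule has_fps_expansion_imp_sums_complex[OF e h]) (use assms in simp)
  then show ?thesis unfolding F2_coeff .
qed


theorem theorem6p1:
  fixes x :: complex
  assumes "norm x < ln 2"
  shows "(\<lambda>n. complex_of_real (b_coeff n) * x ^ n) sums
           (1 / (4 * csqrt (2 * exp (- x) - 1))) \<and>
         (\<lambda>n. complex_of_real (c_coeff n) * x ^ n) sums
           ((of_real pi / 4 - Arctan (csqrt (2 * exp (- x) - 1))) / csqrt (2 * exp (- x) - 1))"
  using part1[OF assms] part2[OF assms] by blast

end
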